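(* Let $\Phi \in \mathbb{R}^{M \times N}$, let $\Lambda \subset \{1, 2, \dots, N\}$, and let $\widetilde{x} \in \mathbb{R}^N$ with $\mathrm{supp}(\widetilde{x}) \cap \Lambda = \emptyset$. Suppose $\Phi$ satisfies the restricted isometry property of order $\|\widetilde{x}\|_0 + |\Lambda| + 1$ with isometry constant $\delta$, and define $h = A_\Lambda^T A_\Lambda \widetilde{x}$. If $$\|\widetilde{x}\|_\infty > \frac{2\delta}{1-\delta}\|\widetilde{x}\|_2,$$ then $\arg\max_j |h(j)| \in \mathrm{supp}(\widetilde{x})$, i.e. every index $j$ maximizing $|h(j)|$ belongs to $\mathrm{supp}(\widetilde{x})$.
   Context: For $x \in \mathbb{R}^N$, $\|x\|_0 := |\mathrm{supp}(x)|$. A matrix $\Phi \in \mathbb{R}^{M\times N}$ satisfies the restricted isometry property (RIP) of order $K$ with isometry constant $\delta \in (0,1)$ if $(1-\delta)\|x\|_2^2 \le \|\Phi x\|_2^2 \le (1+\delta)\|x\|_2^2$ for all $x \in \mathbb{R}^N$ with $\|x\|_0 \le K$. For $\Lambda \subset \{1,\dots,N\}$, $\Phi_\Lambda$ is the submatrix of $\Phi$ consisting of the columns indexed by $\Lambda$, $P_\Lambda$ is the orthogonal projection onto the column space of $\Phi_\Lambda$, $P_\Lambda^\perp = I - P_\Lambda$, and $A_\Lambda := P_\Lambda^\perp \Phi$. *)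

theory Defs
  imports "HOL-Analysis.Analysis"
begin

definition supp :: "real^'n \<Rightarrow> 'n set" where
  "supp x = {i. x $ i \<noteq> 0}"

definition l0 :: "real^'n \<Rightarrow> nat" where
  "l0 x = card (supp x)"

definition RIP :: "real^'n^'m \<Rightarrow> nat \<Rightarrow> real \<Rightarrow> bool" where
  "RIP Phi K \<delta> \<longleftrightarrow> 0 < \<delta> \<and> \<delta> < 1 \<and>
     (\<forall>x::real^'n. l0 x \<le> K \<longrightarrow>
        (1 - \<delta>) * (norm x)\<^sup>2 \<le> (norm (Phi *v x))\<^sup>2 \<and>
        (norm (Phi *v x))\<^sup>2 \<le> (1 + \<delta>) * (norm x)\<^sup>2)"

definition colspace :: "real^'n^'m \<Rightarrow> 'n set \<Rightarrow> (real^'m) set" where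
  "colspace Phi \<Lambda> = span ((\<lambda>j. column j Phi) ` \<Lambda>)"

definition projP :: "real^'n^'m \<Rightarrow> 'n set \<Rightarrow> real^'m \<Rightarrow> real^'m" where
  "projP Phi \<Lambda> v = (THE p. p \<in> colspace Phi \<Lambda> \<and>
       (\<forall>w \<in> colspace Phi \<Lambda>. (v - p) \<bullet> w = 0))"

definition projPperp :: "real^'n^'m \<Rightarrow> 'n set \<Rightarrow> real^'m \<Rightarrow> real^'m" where
  "projPperp Phi \<Lambda> v = v - projP Phi \<Lambda> v"

text \<open>A_Lambda = P_Lambda^perp Phi, as a matrix (column j is P^perp applied to column j).\<close>
definition A_mat :: "real^'n^'m \<Rightarrow> 'n set \<Rightarrow> real^'n^'m" where
  "A_mat Phi \<Lambda> = (\<chi> i j. projPperp Phi \<Lambda> (column j Phi) $ i)"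

end

theory Submission
  imports Defs
begin
lemma projP_props:
  fixes Phi :: "real^'n^'m"
  shows "projP Phi L v \<in> colspace Phi L \<and> (\<forall>w \<in> colspace Phi L. (v - projP Phi L v) \<bullet> w = 0)"
proof -
  let ?S = "(\<lambda>j. column j Phi) ` L"
  obtain y z where y: "y \<in> span ?S" and z: "\<And>w. w \<in> span ?S \<Longrightarrow> orthogonal z w" and e: "v = y + z"
    using orthogonal_subspace_decomp_exists by metis
  have ex: "y \<in> colspace Phi L \<and> (\<forall>w \<in> colspace Phi L. (v - y) \<bullet> w = 0)"
  proof -
    have "v - y = z" using e by simp
    then show ?thesis using y z unfolding colspace_def orthogonal_def by simp
  qed
  have un: "p = y" if "p \<in> colspace Phi L \<and> (\<forall>w \<in> colspace Phi L. (v - p) \<bullet> w = 0)" for p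
  proof -
    have "p - y \<in> colspace Phi L" using that ex unfolding colspace_def by (metis span_diff)
    then have "(v - p) \<bullet> (p - y) = 0" "(v - y) \<bullet> (p - y) = 0" using that ex by blast+
    then have "(p - y) \<bullet> (p - y) = 0" by (simp add: inner_diff_left)
    then show ?thesis by simp
  qed
  have "projP Phi L v = y" unfolding projP_def
    by (rule the_equality) (rule ex, rule un)
  then show ?thesis using ex by simp
qed
lemma A_decomp:
  fixes Phi :: "real^'n^'m"
  shows "\<exists>q. q \<in> colspace Phi L \<and> A_mat Phi L *v u = Phi *v u - q \<and>
            (\<forall>w \<in> colspace Phi L. (A_mat Phi L *v u) \<bullet> w = 0)"
proof -
  let ?p = "\<lambda>j. projP Phi L (column j Phi)"
  define q where "q = (\<Sum>j\<in>UNIV. u$j *\<^sub>R ?p j)"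
  have colA: "column j (A_mat Phi L) = column j Phi - ?p j" for j
    unfolding A_mat_def column_def projPperp_def by (simp add: vec_eq_iff)
  have Au: "A_mat Phi L *v u = (\<Sum>j\<in>UNIV. u$j *\<^sub>R (column j Phi - ?p j))"
    unfolding matrix_mult_sum colA scalar_mult_eq_scaleR ..
  have eq: "A_mat Phi L *v u = Phi *v u - q"
    by (simp only: Au q_def matrix_mult_sum[of Phi] scalar_mult_eq_scaleR scaleR_diff_right sum_subtractf)
  have "q \<in> colspace Phi L" unfolding q_def
    using projP_props[of Phi L] by (intro subspace_sum subspace_scale) (auto simp: colspace_def)
  moreover have "(A_mat Phi L *v u) \<bullet> w = 0" if "w \<in> colspace Phi L" for w
  proof -
    have "(column j Phi - ?p j) \<bullet> w = 0" for j using projP_props[of Phi L "column j Phi"] that by blast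
    then show ?thesis unfolding Au inner_sum_left by simp
  qed
  ultimately show ?thesis using eq by blast
qed
lemma colspace_rep:
  fixes Phi :: "real^'n^'m"
  assumes "q \<in> colspace Phi L"
  shows "\<exists>z. (\<forall>i. i \<notin> L \<longrightarrow> z$i = 0) \<and> q = Phi *v z"
proof -
  let ?Q = "{Phi *v z | z. \<forall>i. i \<notin> L \<longrightarrow> z$i = 0}"
  have sub: "subspace ?Q"
    unfolding subspace_def
  proof (intro conjI ballI allI)
    show "0 \<in> ?Q" by (rule CollectI, rule exI[of _ 0]) simp
  next
    fix a b assume "a \<in> ?Q" "b \<in> ?Q"
    then obtain za zb where "\<forall>i. i \<notin> L \<longrightarrow> za$i = 0" "a = Phi *v za"
       "\<forall>i. i \<notin> L \<longrightarrow> zb$i = 0" "b = Phi *v zb" by blast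
    then show "a + b \<in> ?Q"
      by (intro CollectI exI[of _ "za + zb"]) (simp add: matrix_vector_right_distrib)
  next
    fix c :: real and a assume "a \<in> ?Q"
    then obtain za where "\<forall>i. i \<notin> L \<longrightarrow> za$i = 0" "a = Phi *v za" by blast
    then show "c *\<^sub>R a \<in> ?Q"
      by (intro CollectI exI[of _ "c *\<^sub>R za"]) (simp add: matrix_vector_mult_scaleR)
  qed
  have "(\<lambda>j. column j Phi) ` L \<subseteq> ?Q"
  proof
    fix v assume "v \<in> (\<lambda>j. column j Phi) ` L"
    then obtain j where j: "j \<in> L" "v = column j Phi" by blast
    show "v \<in> ?Q"
    proof (intro CollectI exI[of _ "axis j 1"] conjI allI impI)
      show "v = Phi *v axis j 1" using j by (simp add: matrix_vector_mult_basis)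
      fix i assume "i \<notin> L" then show "axis j 1 $ i = (0::real)" using j by (auto simp: axis_def)
    qed
  qed
  then have "colspace Phi L \<subseteq> ?Q" unfolding colspace_def using sub by (rule span_minimal)
  then show ?thesis using assms by blast
qed

lemma A_props:
  fixes Phi :: "real^'n^'m"
  shows "(norm (Phi *v u))\<^sup>2 = (norm (A_mat Phi L *v u))\<^sup>2 + (norm (Phi *v u - A_mat Phi L *v u))\<^sup>2"
    and "\<exists>z. (\<forall>i. i \<notin> L \<longrightarrow> z$i = 0) \<and> A_mat Phi L *v u = Phi *v (u - z)"
proof -
  obtain q where q: "q \<in> colspace Phi L" "A_mat Phi L *v u = Phi *v u - q"
    "\<forall>w \<in> colspace Phi L. (A_mat Phi L *v u) \<bullet> w = 0"
    using A_decomp by blast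
  have "orthogonal (A_mat Phi L *v u) q" using q by (simp add: orthogonal_def)
  then have "(norm (A_mat Phi L *v u + q))\<^sup>2 = (norm (A_mat Phi L *v u))\<^sup>2 + (norm q)\<^sup>2"
    by (rule norm_add_Pythagorean)
  moreover have "Phi *v u = A_mat Phi L *v u + q" "Phi *v u - A_mat Phi L *v u = q" using q by simp_all
  ultimately show "(norm (Phi *v u))\<^sup>2 = (norm (A_mat Phi L *v u))\<^sup>2 + (norm (Phi *v u - A_mat Phi L *v u))\<^sup>2"
    by simp
  obtain z where z: "\<forall>i. i \<notin> L \<longrightarrow> z$i = 0" "q = Phi *v z" using colspace_rep[OF q(1)] by blast
  show "\<exists>z. (\<forall>i. i \<notin> L \<longrightarrow> z$i = 0) \<and> A_mat Phi L *v u = Phi *v (u - z)"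
    using z q by (intro exI[of _ z]) (simp add: matrix_vector_mult_diff_distrib)
qed

lemma A_col_zero:
  fixes Phi :: "real^'n^'m"
  assumes "j \<in> L"
  shows "A_mat Phi L *v axis j 1 = 0"
proof -
  obtain q where q: "q \<in> colspace Phi L" "A_mat Phi L *v axis j 1 = Phi *v axis j 1 - q"
    "\<forall>w \<in> colspace Phi L. (A_mat Phi L *v axis j 1) \<bullet> w = 0"
    using A_decomp by blast
  have "Phi *v axis j 1 \<in> colspace Phi L"
    unfolding colspace_def matrix_vector_mult_basis using assms by (auto intro: span_base)
  then have "A_mat Phi L *v axis j 1 \<in> colspace Phi L"
    using q unfolding colspace_def by (metis span_diff)
  then have "(A_mat Phi L *v axis j 1) \<bullet> (A_mat Phi L *v axis j 1) = 0" using q by blast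
  then show ?thesis by simp
qed

lemma h_comp:
  fixes A :: "real^'n^'m"
  shows "(transpose A *v (A *v x)) $ k = (A *v axis k 1) \<bullet> (A *v x)"
  unfolding matrix_vector_mult_basis
  by (simp add: transpose_def matrix_vector_mult_def column_def inner_vec_def mult.commute)
lemma A_rip:
  fixes Phi :: "real^'n^'m"
  assumes rip: "RIP Phi K d" and dis: "supp u \<inter> L = {}" and card: "l0 u + card L \<le> K"
  shows "(1 - d) * (norm u)\<^sup>2 \<le> (norm (A_mat Phi L *v u))\<^sup>2"
    and "(norm (A_mat Phi L *v u))\<^sup>2 \<le> (1 + d) * (norm u)\<^sup>2"
proof -
  have R: "\<And>x::real^'n. l0 x \<le> K \<Longrightarrow> (1 - d) * (norm x)\<^sup>2 \<le> (norm (Phi *v x))\<^sup>2 \<and>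
        (norm (Phi *v x))\<^sup>2 \<le> (1 + d) * (norm x)\<^sup>2" and d: "0 < d" "d < 1"
    using rip unfolding RIP_def by blast+
  obtain z where z: "\<forall>i. i \<notin> L \<longrightarrow> z$i = 0" "A_mat Phi L *v u = Phi *v (u - z)"
    using A_props(2) by blast
  have "supp (u - z) \<subseteq> supp u \<union> L" using z(1) unfolding supp_def by auto
  then have "l0 (u - z) \<le> card (supp u \<union> L)" unfolding l0_def by (intro card_mono) auto
  also have "\<dots> \<le> l0 u + card L" unfolding l0_def by (rule card_Un_le)
  finally have l1: "l0 (u - z) \<le> K" using card by simp
  have uz: "u \<bullet> z = 0"
  proof -
    have "u$i * z$i = 0" for i
    proof (cases "i \<in> L")
      case True then have "u$i = 0" using dis unfolding supp_def by auto
      then show ?thesis by simp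
    next
      case False then show ?thesis using z(1) by simp
    qed
    then show ?thesis unfolding inner_vec_def inner_real_def by (intro sum.neutral) blast
  qed
  have "(norm (u - z))\<^sup>2 = (norm u)\<^sup>2 + (norm z)\<^sup>2"
    unfolding power2_norm_eq_inner using uz by (simp add: inner_diff_left inner_diff_right inner_commute)
  then have "(norm u)\<^sup>2 \<le> (norm (u - z))\<^sup>2" by simp
  then have "(1 - d) * (norm u)\<^sup>2 \<le> (1 - d) * (norm (u - z))\<^sup>2" using d by (intro mult_left_mono) auto
  also have "\<dots> \<le> (norm (A_mat Phi L *v u))\<^sup>2" using R[OF l1] z(2) by simp
  finally show "(1 - d) * (norm u)\<^sup>2 \<le> (norm (A_mat Phi L *v u))\<^sup>2" .
  have "(norm (A_mat Phi L *v u))\<^sup>2 \<le> (norm (Phi *v u))\<^sup>2" using A_props(1)[of Phi u L] by simp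
  also have "\<dots> \<le> (1 + d) * (norm u)\<^sup>2" using R[of u] card by simp
  finally show "(norm (A_mat Phi L *v u))\<^sup>2 \<le> (1 + d) * (norm u)\<^sup>2" .
qed
lemma supp_small:
  fixes x :: "real^'n"
  assumes "supp x \<inter> L = {}" "j \<notin> L" "supp s \<subseteq> insert j (supp x)"
  shows "supp s \<inter> L = {}" "l0 s \<le> l0 x + 1"
proof -
  show "supp s \<inter> L = {}" using assms by blast
  have "l0 s \<le> card (insert j (supp x))" unfolding l0_def using assms(3) by (intro card_mono) auto
  also have "\<dots> \<le> l0 x + 1" unfolding l0_def by (metis card_insert_le_m1 add.commute card_insert_if finite eq_imp_le Suc_eq_plus1 le_SucI)
  finally show "l0 s \<le> l0 x + 1" .
qed

lemma h_bound:
  fixes Phi :: "real^'n^'m"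
  assumes rip: "RIP Phi (l0 x + card L + 1) d" and dis: "supp x \<inter> L = {}" and j: "j \<notin> L"
  shows "\<bar>(A_mat Phi L *v axis j 1) \<bullet> (A_mat Phi L *v x) - x$j\<bar> \<le> d * norm x"
proof (cases "x = 0")
  case True then show ?thesis by simp
next
  case False
  let ?A = "\<lambda>v. A_mat Phi L *v v"
  define a :: "real^'n" where "a = axis j 1"
  define b where "b = x /\<^sub>R norm x"
  have nx: "norm x > 0" using False by simp
  have na: "a \<bullet> a = 1" unfolding a_def by (simp add: inner_axis_axis)
  have nb: "b \<bullet> b = 1" unfolding b_def using nx by (simp add: power2_norm_eq_inner[symmetric] divide_simps)
  have sb: "supp b = supp x" unfolding b_def supp_def using nx by auto
  have sa: "supp a \<subseteq> {j}" unfolding a_def supp_def by (auto simp: axis_def)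
  have s1: "supp (a + b) \<subseteq> insert j (supp x)" "supp (a - b) \<subseteq> insert j (supp x)"
  proof -
    have z: "(a + b)$t = 0 \<and> (a - b)$t = 0" if "t \<notin> insert j (supp x)" for t
    proof -
      have "a$t = 0" using sa that unfolding supp_def by auto
      moreover have "b$t = 0" using sb that unfolding supp_def by auto
      ultimately show ?thesis by simp
    qed
    show "supp (a + b) \<subseteq> insert j (supp x)" "supp (a - b) \<subseteq> insert j (supp x)"
      using z unfolding supp_def[of "a+b"] supp_def[of "a-b"] by blast+
  qed
  have K1: "l0 (a + b) + card L \<le> l0 x + card L + 1" "l0 (a - b) + card L \<le> l0 x + card L + 1"
    using supp_small[OF dis j s1(1)] supp_small[OF dis j s1(2)] by auto
  note r1 = A_rip[OF rip supp_small(1)[OF dis j s1(1)] K1(1)]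
  note r2 = A_rip[OF rip supp_small(1)[OF dis j s1(2)] K1(2)]
  have e1: "?A (a + b) = ?A a + ?A b" by (simp add: matrix_vector_right_distrib)
  have e2: "?A (a - b) = ?A a - ?A b" by (simp add: matrix_vector_mult_diff_distrib)
  have P: "(norm (?A a + ?A b))\<^sup>2 - (norm (?A a - ?A b))\<^sup>2 = 4 * (?A a \<bullet> ?A b)"
    by (simp add: power2_norm_eq_inner inner_add_left inner_add_right inner_diff_left inner_diff_right inner_commute)
  have Q: "(norm (a + b))\<^sup>2 - (norm (a - b))\<^sup>2 = 4 * (a \<bullet> b)"
    by (simp add: power2_norm_eq_inner inner_add_left inner_add_right inner_diff_left inner_diff_right inner_commute)
  have S: "(norm (a + b))\<^sup>2 + (norm (a - b))\<^sup>2 = 4"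
    using na nb by (simp add: power2_norm_eq_inner inner_add_left inner_add_right inner_diff_left inner_diff_right inner_commute)
  have key: "\<bar>?A a \<bullet> ?A b - a \<bullet> b\<bar> \<le> d"
  proof -
    have D: "d * (norm (a + b))\<^sup>2 + d * (norm (a - b))\<^sup>2 = 4 * d" using S by (metis distrib_left mult.commute)
    show ?thesis using r1 r2 P Q D unfolding e1 e2 left_diff_distrib distrib_right by (simp only: abs_le_iff mult_1) linarith
  qed
  have xb: "x = norm x *\<^sub>R b" unfolding b_def using nx by simp
  have "?A a \<bullet> ?A x - x$j = norm x * (?A a \<bullet> ?A b - a \<bullet> b)"
    by (subst (1 2) xb) (simp add: matrix_vector_mult_scaleR a_def inner_axis' algebra_simps b_def)
  then have "\<bar>?A a \<bullet> ?A x - x$j\<bar> = norm x * \<bar>?A a \<bullet> ?A b - a \<bullet> b\<bar>" by (simp add: abs_mult)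
  also have "\<dots> \<le> norm x * d" using key nx by (intro mult_left_mono) auto
  finally show ?thesis unfolding a_def by (simp add: mult.commute)
qed
theorem corollary1:
  fixes Phi :: "real^'n^'m" and \<Lambda> :: "'n set" and x :: "real^'n" and \<delta> :: real
  assumes "supp x \<inter> \<Lambda> = {}"
    and "RIP Phi (l0 x + card \<Lambda> + 1) \<delta>"
    and "infnorm x > 2 * \<delta> / (1 - \<delta>) * norm x"
  shows "\<forall>j. (\<forall>k. \<bar>(transpose (A_mat Phi \<Lambda>) *v (A_mat Phi \<Lambda> *v x)) $ k\<bar>
                   \<le> \<bar>(transpose (A_mat Phi \<Lambda>) *v (A_mat Phi \<Lambda> *v x)) $ j\<bar>)
             \<longrightarrow> j \<in> supp x"
proof (intro allI impI)
  fix j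
  let ?h = "\<lambda>k. (transpose (A_mat Phi \<Lambda>) *v (A_mat Phi \<Lambda> *v x)) $ k"
  assume max: "\<forall>k. \<bar>?h k\<bar> \<le> \<bar>?h j\<bar>"
  have hk: "?h k = (A_mat Phi \<Lambda> *v axis k 1) \<bullet> (A_mat Phi \<Lambda> *v x)" for k by (rule h_comp)
  have d: "0 < \<delta>" "\<delta> < 1" using assms(2) unfolding RIP_def by auto
  have "2 * \<delta> * (1 - \<delta>) \<le> 2 * \<delta>"
  proof -
    have "2 * \<delta> * (1 - \<delta>) = 2 * \<delta> - 2 * (\<delta> * \<delta>)" by (simp add: algebra_simps)
    moreover have "0 \<le> \<delta> * \<delta>" by simp
    ultimately show ?thesis by linarith
  qed
  then have "2 * \<delta> \<le> 2 * \<delta> / (1 - \<delta>)" using d by (simp add: le_divide_eq)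
  then have "2 * \<delta> * norm x \<le> 2 * \<delta> / (1 - \<delta>) * norm x" by (intro mult_right_mono) auto
  then have inf: "infnorm x > 2 * \<delta> * norm x" using assms(3) by linarith
  have "finite (range (\<lambda>i. \<bar>x$i\<bar>))" by simp
  moreover have "{\<bar>x$i\<bar> |i. i\<in>UNIV} = range (\<lambda>i. \<bar>x$i\<bar>)" by auto
  ultimately have "infnorm x = Max (range (\<lambda>i. \<bar>x$i\<bar>))"
    unfolding infnorm_cart by (simp add: cSup_eq_Max)
  moreover have "Max (range (\<lambda>i. \<bar>x$i\<bar>)) \<in> range (\<lambda>i. \<bar>x$i\<bar>)" by (intro Max_in) auto
  ultimately obtain i0 where i0: "infnorm x = \<bar>x$i0\<bar>" by (metis (no_types, lifting) imageE)
  have nn: "0 \<le> \<delta> * norm x" using d by simp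
  have "\<bar>x$i0\<bar> > 2 * \<delta> * norm x" using inf i0 by simp
  then have "x$i0 \<noteq> 0" using nn by auto
  then have i0s: "i0 \<in> supp x" unfolding supp_def by simp
  then have i0L: "i0 \<notin> \<Lambda>" using assms(1) by blast
  have "\<bar>?h i0 - x$i0\<bar> \<le> \<delta> * norm x" unfolding hk by (rule h_bound[OF assms(2) assms(1) i0L])
  then have big: "\<bar>?h i0\<bar> > \<delta> * norm x" using \<open>\<bar>x$i0\<bar> > 2 * \<delta> * norm x\<close> by linarith
  show "j \<in> supp x"
  proof (rule ccontr)
    assume js: "j \<notin> supp x"
    show False
    proof (cases "j \<in> \<Lambda>")
      case True
      then have "?h j = 0" unfolding hk by (simp add: A_col_zero)
      then show False using max[rule_format, of i0] big nn by simp
    next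
      case False
      have "\<bar>?h j - x$j\<bar> \<le> \<delta> * norm x" unfolding hk by (rule h_bound[OF assms(2) assms(1) False])
      moreover have "x$j = 0" using js unfolding supp_def by simp
      ultimately show False using max[rule_format, of i0] big by simp
    qed
  qed
qed
end
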